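(* Let $G$ be a second countable étale groupoid whose unit space $G^{(0)}$ is compact and totally disconnected. If $G$ is almost finite, then $M(G)$ is nonempty.
   Context: An étale groupoid is a locally compact Hausdorff groupoid whose range map $r$ is a local homeomorphism; $s$ is the source map. A $G$-set is $U\subset G$ with $r|_U,s|_U$ injective. $M(G)$ is the set of probability measures $\mu$ on $G^{(0)}$ with $\mu(r(U))=\mu(s(U))$ for every open $G$-set $U$. Elementary subgroupoid: compact open principal subgroupoid $K$ with $K^{(0)}=G^{(0)}$ (principal: $r(k)=s(k)$ implies $k$ is a unit). $G$ is almost finite if for every compact $C\subset G$ and $\varepsilon>0$ there is an elementary subgroupoid $K$ with $|CKx\setminus Kx|/|K(x)|<\varepsilon$ for all $x\in G^{(0)}$, where $Kx=\{k\in K:s(k)=x\}$, $CKx=\{ck:c\in C,k\in Kx,s(c)=r(k)\}$, $K(x)=r(Kx)$. *)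

theory Defs
  imports "HOL-Analysis.Analysis" "HOL-Probability.Probability"
begin

text \<open>A groupoid is given by its set of arrows (the carrier of the topology T),
the unit space G0, range r, source s, partial multiplication m (defined on
composable pairs (x,y) with s x = r y) and inversion i.\<close>

definition composable :: "'g topology \<Rightarrow> ('g \<Rightarrow> 'g) \<Rightarrow> ('g \<Rightarrow> 'g) \<Rightarrow> ('g \<times> 'g) set" where
  "composable T r s = {(x, y). x \<in> topspace T \<and> y \<in> topspace T \<and> s x = r y}"

definition groupoid ::
  "'g set \<Rightarrow> 'g set \<Rightarrow> ('g \<Rightarrow> 'g) \<Rightarrow> ('g \<Rightarrow> 'g) \<Rightarrow> ('g \<Rightarrow> 'g \<Rightarrow> 'g) \<Rightarrow> ('g \<Rightarrow> 'g) \<Rightarrow> bool" where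
  "groupoid G G0 r s m i \<longleftrightarrow>
     G0 \<subseteq> G \<and>
     (\<forall>x\<in>G. r x \<in> G0 \<and> s x \<in> G0) \<and>
     (\<forall>u\<in>G0. r u = u \<and> s u = u) \<and>
     (\<forall>x\<in>G. \<forall>y\<in>G. s x = r y \<longrightarrow> m x y \<in> G \<and> r (m x y) = r x \<and> s (m x y) = s y) \<and>
     (\<forall>x\<in>G. \<forall>y\<in>G. \<forall>z\<in>G. s x = r y \<and> s y = r z \<longrightarrow> m (m x y) z = m x (m y z)) \<and>
     (\<forall>x\<in>G. m (r x) x = x \<and> m x (s x) = x) \<and>
     (\<forall>x\<in>G. i x \<in> G \<and> r (i x) = s x \<and> s (i x) = r x \<and> m x (i x) = r x \<and> m (i x) x = s x)"

definition etale_groupoid ::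
  "'g topology \<Rightarrow> 'g set \<Rightarrow> ('g \<Rightarrow> 'g) \<Rightarrow> ('g \<Rightarrow> 'g) \<Rightarrow> ('g \<Rightarrow> 'g \<Rightarrow> 'g) \<Rightarrow> ('g \<Rightarrow> 'g) \<Rightarrow> bool" where
  "etale_groupoid T G0 r s m i \<longleftrightarrow>
     groupoid (topspace T) G0 r s m i \<and>
     Hausdorff_space T \<and> locally_compact_space T \<and>
     continuous_map (subtopology (prod_topology T T) (composable T r s)) T (\<lambda>(x, y). m x y) \<and>
     continuous_map T T i \<and>
     (\<forall>x\<in>topspace T. \<exists>U. openin T U \<and> x \<in> U \<and>
        openin (subtopology T G0) (r ` U) \<and>
        homeomorphic_map (subtopology T U) (subtopology T (r ` U)) r)"

definition Gset :: "('g \<Rightarrow> 'g) \<Rightarrow> ('g \<Rightarrow> 'g) \<Rightarrow> 'g set \<Rightarrow> bool" where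
  "Gset r s U \<longleftrightarrow> inj_on r U \<and> inj_on s U"

definition totally_disconnected_space :: "'a topology \<Rightarrow> bool" where
  "totally_disconnected_space X \<longleftrightarrow>
     (\<forall>x\<in>topspace X. connected_component_of_set X x = {x})"

definition invariant_measures ::
  "'g topology \<Rightarrow> 'g set \<Rightarrow> ('g \<Rightarrow> 'g) \<Rightarrow> ('g \<Rightarrow> 'g) \<Rightarrow> 'g measure set" where
  "invariant_measures T G0 r s =
     {\<mu>. space \<mu> = G0 \<and> sets \<mu> = sigma_sets G0 {U. openin (subtopology T G0) U} \<and>
          prob_space \<mu> \<and>
          (\<forall>U. openin T U \<and> Gset r s U \<longrightarrow> emeasure \<mu> (r ` U) = emeasure \<mu> (s ` U))}"

definition elementary_subgroupoid ::
  "'g topology \<Rightarrow> 'g set \<Rightarrow> ('g \<Rightarrow> 'g) \<Rightarrow> ('g \<Rightarrow> 'g) \<Rightarrow> ('g \<Rightarrow> 'g \<Rightarrow> 'g) \<Rightarrow> ('g \<Rightarrow> 'g) \<Rightarrow> 'g set \<Rightarrow> bool" where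
  "elementary_subgroupoid T G0 r s m i K \<longleftrightarrow>
     compactin T K \<and> openin T K \<and>
     G0 \<subseteq> K \<and>
     (\<forall>x\<in>K. \<forall>y\<in>K. s x = r y \<longrightarrow> m x y \<in> K) \<and>
     (\<forall>x\<in>K. i x \<in> K) \<and>
     (\<forall>k\<in>K. r k = s k \<longrightarrow> k \<in> G0)"

definition almost_finite ::
  "'g topology \<Rightarrow> 'g set \<Rightarrow> ('g \<Rightarrow> 'g) \<Rightarrow> ('g \<Rightarrow> 'g) \<Rightarrow> ('g \<Rightarrow> 'g \<Rightarrow> 'g) \<Rightarrow> ('g \<Rightarrow> 'g) \<Rightarrow> bool" where
  "almost_finite T G0 r s m i \<longleftrightarrow>
     (\<forall>C (\<epsilon>::real). compactin T C \<and> \<epsilon> > 0 \<longrightarrow>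
        (\<exists>K. elementary_subgroupoid T G0 r s m i K \<and>
           (\<forall>x\<in>G0.
              let Kx = {k \<in> K. s k = x};
                  CKx = {m c k | c k. c \<in> C \<and> k \<in> Kx \<and> s c = r k}
              in real (card (CKx - Kx)) / real (card (r ` Kx)) < \<epsilon>)))"

end

theory Submission
  imports Defs
begin


locale EG =
  fixes T :: "'g topology" and G0 :: "'g set"
    and r s :: "'g \<Rightarrow> 'g" and m :: "'g \<Rightarrow> 'g \<Rightarrow> 'g" and i :: "'g \<Rightarrow> 'g"
  assumes etale: "etale_groupoid T G0 r s m i"
begin

abbreviation "G \<equiv> topspace T"
abbreviation "X \<equiv> subtopology T G0"

lemma grp: "groupoid G G0 r s m i" using etale by (simp add: etale_groupoid_def)
lemma Haus: "Hausdorff_space T" using etale by (simp add: etale_groupoid_def)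
lemma i_cont: "continuous_map T T i" using etale by (simp add: etale_groupoid_def)
lemma loc: "\<And>x. x \<in> G \<Longrightarrow> \<exists>U. openin T U \<and> x \<in> U \<and>
        openin X (r ` U) \<and> homeomorphic_map (subtopology T U) (subtopology T (r ` U)) r"
  using etale by (simp add: etale_groupoid_def)

lemma G0G: "G0 \<subseteq> G" using grp by (simp add: groupoid_def)
lemma topX: "topspace X = G0" using G0G by auto
lemma rG0: "x \<in> G \<Longrightarrow> r x \<in> G0" using grp by (simp add: groupoid_def)
lemma sG0: "x \<in> G \<Longrightarrow> s x \<in> G0" using grp by (simp add: groupoid_def)
lemma rG: "x \<in> G \<Longrightarrow> r x \<in> G" using rG0 G0G by auto
lemma sG: "x \<in> G \<Longrightarrow> s x \<in> G" using sG0 G0G by auto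
lemma unit_r: "u \<in> G0 \<Longrightarrow> r u = u" using grp by (simp add: groupoid_def)
lemma unit_s: "u \<in> G0 \<Longrightarrow> s u = u" using grp by (simp add: groupoid_def)
lemma mG: "x \<in> G \<Longrightarrow> y \<in> G \<Longrightarrow> s x = r y \<Longrightarrow> m x y \<in> G \<and> r (m x y) = r x \<and> s (m x y) = s y"
  using grp by (simp add: groupoid_def)
lemma assoc: "x \<in> G \<Longrightarrow> y \<in> G \<Longrightarrow> z \<in> G \<Longrightarrow> s x = r y \<Longrightarrow> s y = r z \<Longrightarrow> m (m x y) z = m x (m y z)"
  using grp by (simp add: groupoid_def)
lemma unitl: "x \<in> G \<Longrightarrow> m (r x) x = x" using grp by (simp add: groupoid_def)
lemma unitr: "x \<in> G \<Longrightarrow> m x (s x) = x" using grp by (simp add: groupoid_def)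
lemma inv: "x \<in> G \<Longrightarrow> i x \<in> G \<and> r (i x) = s x \<and> s (i x) = r x \<and> m x (i x) = r x \<and> m (i x) x = s x"
  using grp by (simp add: groupoid_def)

lemma ii: assumes "x \<in> G" shows "i (i x) = x"
proof -
  let ?y = "i x"
  have y: "?y \<in> G" "r ?y = s x" "s ?y = r x" "m x ?y = r x" "m ?y x = s x" using inv assms by auto
  have iy: "i ?y \<in> G" "r (i ?y) = s ?y" "s (i ?y) = r ?y" "m ?y (i ?y) = r ?y" "m (i ?y) ?y = s ?y"
    using inv y(1) by auto
  have "i ?y = m (i ?y) (s (i ?y))" using unitr iy(1) by simp
  also have "\<dots> = m (i ?y) (m ?y x)" using iy y by simp
  also have "\<dots> = m (m (i ?y) ?y) x" using assoc[of "i ?y" ?y x] iy y assms by simp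
  also have "\<dots> = x" using iy y unitl assms by simp
  finally show ?thesis .
qed

lemma s_eq: "x \<in> G \<Longrightarrow> s x = r (i x)" using inv by simp

lemma i_homeo: "homeomorphic_map T T i"
proof (rule homeomorphic_maps_imp_map[of T T i i])
  show "homeomorphic_maps T T i i" unfolding homeomorphic_maps_def using i_cont ii by blast
qed

lemma i_image_G: "i ` G = G"
  using inv ii by (metis homeomorphic_imp_surjective_map i_homeo)

lemma r_cont: "continuous_map T X r"
unfolding continuous_map_def
proof (intro conjI allI impI)
  show "r \<in> G \<rightarrow> topspace X" using rG0 topX by auto
next
  fix W assume W: "openin X W"
  show "openin T {x \<in> G. r x \<in> W}"
  proof (subst openin_subopen, intro ballI)
    fix x assume "x \<in> {x \<in> G. r x \<in> W}"
    then have x: "x \<in> G" "r x \<in> W" by auto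
    obtain U where U: "openin T U" "x \<in> U" "openin X (r ` U)"
      "homeomorphic_map (subtopology T U) (subtopology T (r ` U)) r" using loc[OF x(1)] by blast
    have c: "continuous_map (subtopology T U) (subtopology T (r ` U)) r"
      using U(4) homeomorphic_imp_continuous_map by blast
    obtain W' where W': "openin T W'" "W = W' \<inter> G0" using W by (auto simp: openin_subtopology)
    have rUG0: "r ` U \<subseteq> G0" using U(1) openin_subset rG0 by blast
    have "W \<inter> r ` U = W' \<inter> r ` U" using W' rUG0 by blast
    then have "openin (subtopology T (r ` U)) (W \<inter> r ` U)"
      using W'(1) by (auto simp: openin_subtopology)
    then have "openin (subtopology T U) {y \<in> topspace (subtopology T U). r y \<in> W \<inter> r ` U}"
      using c unfolding continuous_map_def by blast
    then have "openin T {y \<in> topspace (subtopology T U). r y \<in> W \<inter> r ` U}"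
      using U(1) openin_trans_full by blast
    moreover have "{y \<in> topspace (subtopology T U). r y \<in> W \<inter> r ` U} = {y \<in> U. r y \<in> W}"
      using U(1) openin_subset by auto
    ultimately show "\<exists>T'. openin T T' \<and> x \<in> T' \<and> T' \<subseteq> {x \<in> G. r x \<in> W}"
      using x U(2) U(1) openin_subset by (intro exI[of _ "{y \<in> U. r y \<in> W}"]) auto
  qed
qed

lemma s_cont: "continuous_map T X s"
proof -
  have "continuous_map T X (r \<circ> i)" using r_cont i_cont continuous_map_compose by blast
  then show ?thesis by (rule continuous_map_eq) (simp add: s_eq)
qed

lemma i_open: "openin T V \<Longrightarrow> openin T (i ` V)"
  using homeomorphic_imp_open_map[OF i_homeo] by (simp add: open_map_def)

lemma i_compact: "compactin T V \<Longrightarrow> compactin T (i ` V)"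
  using image_compactin i_cont by blast

lemma r_open: assumes V: "openin T V" shows "openin X (r ` V)"
proof (subst openin_subopen, intro ballI)
  fix y assume "y \<in> r ` V"
  then obtain x where x: "x \<in> V" "y = r x" by blast
  have xG: "x \<in> G" using x V openin_subset by blast
  obtain U where U: "openin T U" "x \<in> U" "openin X (r ` U)"
      "homeomorphic_map (subtopology T U) (subtopology T (r ` U)) r" using loc[OF xG] by blast
  have "openin (subtopology T U) (V \<inter> U)" using V by (simp add: openin_subtopology_Int)
  then have "openin (subtopology T (r ` U)) (r ` (V \<inter> U))"
    using homeomorphic_imp_open_map[OF U(4)] by (simp add: open_map_def)
  moreover have "subtopology T (r ` U) = subtopology X (r ` U)"
  proof -
    have "r ` U \<subseteq> G0" using U(1) openin_subset rG0 by blast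
    then have "G0 \<inter> r ` U = r ` U" by blast
    then show ?thesis by (simp add: subtopology_subtopology)
  qed
  ultimately have "openin X (r ` (V \<inter> U))" using U(3) openin_trans_full by metis
  then show "\<exists>T'. openin X T' \<and> y \<in> T' \<and> T' \<subseteq> r ` V"
    using x U(2) by (intro exI[of _ "r ` (V \<inter> U)"]) auto
qed

lemma s_image: "V \<subseteq> G \<Longrightarrow> s ` V = r ` (i ` V)"
  using s_eq by (auto simp: image_image subset_iff)

lemma r_image_i: "V \<subseteq> G \<Longrightarrow> r ` (i ` V) = s ` V"
  using s_image by simp

lemma s_image_i: "V \<subseteq> G \<Longrightarrow> s ` (i ` V) = r ` V"
proof -
  assume V: "V \<subseteq> G"
  have "i ` V \<subseteq> G" using V inv by blast
  then have "s ` (i ` V) = r ` (i ` (i ` V))" by (rule s_image)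
  also have "i ` (i ` V) = V" using V ii by (force simp: image_image)
  finally show ?thesis .
qed

lemma s_open: "openin T V \<Longrightarrow> openin X (s ` V)"
  using s_image[of V] openin_subset[of T V] r_open i_open by auto

lemma r_locinj: "x \<in> G \<Longrightarrow> \<exists>U. openin T U \<and> x \<in> U \<and> inj_on r U"
proof -
  assume "x \<in> G"
  then obtain U where U: "openin T U" "x \<in> U"
      "homeomorphic_map (subtopology T U) (subtopology T (r ` U)) r" using loc by blast
  have "inj_on r (topspace (subtopology T U))" using U(3) homeomorphic_map_def by blast
  moreover have "topspace (subtopology T U) = U" using U(1) openin_subset by auto
  ultimately show ?thesis using U by auto
qed

lemma s_locinj: "x \<in> G \<Longrightarrow> \<exists>U. openin T U \<and> x \<in> U \<and> inj_on s U"
proof -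
  assume x: "x \<in> G"
  then obtain U where U: "openin T U" "i x \<in> U" "inj_on r U" using r_locinj inv by blast
  have UG: "U \<subseteq> G" using U(1) openin_subset by blast
  have "inj_on s (i ` U)"
  proof (rule inj_onI)
    fix a b assume "a \<in> i ` U" "b \<in> i ` U" "s a = s b"
    then obtain a' b' where "a' \<in> U" "b' \<in> U" "a = i a'" "b = i b'" by blast
    then show "a = b" using \<open>s a = s b\<close> UG U(3) inv by (metis inj_onD subsetD)
  qed
  moreover have "x \<in> i ` U" using U(2) ii[OF x] by (metis image_eqI)
  ultimately show ?thesis using i_open U(1) by blast
qed

lemma finite_fiber_s:
  assumes C: "compactin T C" shows "finite {c \<in> C. s c = y}"
proof -
  let ?U = "{V. openin T V \<and> inj_on s V}"
  have "C \<subseteq> \<Union>?U" using C compactin_subset_topspace s_locinj by blast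
  then obtain F where F: "finite F" "F \<subseteq> ?U" "C \<subseteq> \<Union>F"
    using C unfolding compactin_def by (metis (no_types, lifting) mem_Collect_eq)
  have "{c \<in> C. s c = y} \<subseteq> (\<Union>V\<in>F. {c \<in> V. s c = y})" using F(3) by blast
  moreover have "finite {c \<in> V. s c = y}" if "V \<in> F" for V
  proof -
    have "inj_on s V" using that F(2) by blast
    then have "{c \<in> V. s c = y} \<subseteq> the_inv_into V s ` {y}"
      by (auto intro: the_inv_into_f_f[symmetric] simp: image_iff)
    then show ?thesis using finite_subset by blast
  qed
  ultimately show ?thesis using F(1) by (meson finite_UN_I finite_subset)
qed

end



locale EG2 = EG +
  assumes G0cpt: "compactin T G0"
    and totdisc: "totally_disconnected_space (subtopology T G0)"
    and sc: "second_countable T"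
begin

lemma X_compact: "compact_space X" using G0cpt compact_space_subtopology by blast
lemma X_Haus: "Hausdorff_space X" using Haus Hausdorff_space_subtopology by blast

lemma clopen_nbhd:
  assumes W: "openin X W" and x: "x \<in> W"
  shows "\<exists>A. closedin X A \<and> openin X A \<and> x \<in> A \<and> A \<subseteq> W"
proof -
  have xX: "x \<in> topspace X" using W x openin_subset by blast
  have "quasi_component_of X x = connected_component_of X x"
    using X_compact X_Haus by (simp add: quasi_eq_connected_component_of)
  then have q: "quasi_component_of_set X x = {x}"
    using totdisc xX unfolding totally_disconnected_space_def by simp
  have qc: "{x} \<in> quasi_components_of X"
    unfolding quasi_components_of_def using q[symmetric] xX by blast
  have K: "compactin X (topspace X - W)"
    using W X_compact closedin_compact_space by blast
  have "disjnt {x} (topspace X - W)" using x by auto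
  then have "separated_between X {x} (topspace X - W)"
    using separated_between_quasi_component_compact[OF qc K] by simp
  then obtain U V where UV: "openin X U" "openin X V" "U \<union> V = topspace X" "disjnt U V"
      "{x} \<subseteq> U" "topspace X - W \<subseteq> V"
    unfolding separated_between_def by blast
  have "U = topspace X - V" using UV(3,4) by (auto simp: disjnt_def)
  then have "closedin X U" using UV(2) by (metis closedin_diff closedin_topspace)
  moreover have "U \<subseteq> W" using UV(3,4,6) openin_subset[OF UV(1)] by (auto simp: disjnt_def)
  ultimately show ?thesis using UV(1,5) by blast
qed

lemma clopen_closed_T: "closedin X A \<Longrightarrow> closedin T A"
  using closedin_trans_full[of T G0 A] G0cpt compactin_imp_closedin Haus by blast

lemma bisection_basis:
  assumes W: "openin T W" and g: "g \<in> W"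
  shows "\<exists>V. g \<in> V \<and> V \<subseteq> W \<and> openin T V \<and> compactin T V \<and> Gset r s V"
proof -
  have gG: "g \<in> G" using W g openin_subset by blast
  obtain U where U: "openin T U" "g \<in> U" "openin X (r ` U)"
      "homeomorphic_map (subtopology T U) (subtopology T (r ` U)) r" using loc[OF gG] by blast
  obtain U2 where U2: "openin T U2" "g \<in> U2" "inj_on s U2" using s_locinj[OF gG] by blast
  let ?O = "W \<inter> U \<inter> U2"
  have O: "openin T ?O" using W U U2 by blast
  have UG: "U \<subseteq> G" using U(1) openin_subset by blast
  obtain A where A: "closedin X A" "openin X A" "r g \<in> A" "A \<subseteq> r ` ?O"
    using clopen_nbhd[OF r_open[OF O]] g U(2) U2(2) by blast
  obtain h where h: "homeomorphic_maps (subtopology T U) (subtopology T (r ` U)) r h"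
    using U(4) homeomorphic_map_maps by blast
  have hc: "continuous_map (subtopology T (r ` U)) (subtopology T U) h"
    and hr: "\<And>y. y \<in> U \<Longrightarrow> h (r y) = y"
    using h UG unfolding homeomorphic_maps_def by auto
  let ?V = "{y \<in> ?O. r y \<in> A}"
  have Veq: "?V = h ` A"
  proof
    show "?V \<subseteq> h ` A" using hr by (auto intro!: image_eqI)
    show "h ` A \<subseteq> ?V"
    proof
      fix z assume "z \<in> h ` A"
      then obtain a where a: "a \<in> A" "z = h a" by blast
      then obtain y where y: "y \<in> ?O" "a = r y" using A(4) by blast
      then show "z \<in> ?V" using a hr by auto
    qed
  qed
  have AU: "A \<subseteq> r ` U" using A(4) by blast
  have "compactin X A" using A(1) X_compact closedin_compact_space by blast
  then have "compactin T A" using compactin_subtopology by blast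
  then have "compactin (subtopology T (r ` U)) A" using AU compactin_subtopology by blast
  then have "compactin (subtopology T U) (h ` A)" using hc image_compactin by blast
  then have cV: "compactin T ?V" using Veq compactin_subtopology by metis
  have "openin T {y \<in> G. r y \<in> A}" using r_cont A(2) openin_continuous_map_preimage by blast
  moreover have "?V = ?O \<inter> {y \<in> G. r y \<in> A}" using O openin_subset by blast
  ultimately have oV: "openin T ?V" using O by (metis openin_Int)
  have "inj_on r U" using U(4) homeomorphic_map_def U(1) openin_subset
    by (metis topspace_subtopology_subset)
  then have "Gset r s ?V" unfolding Gset_def using U2(3) by (auto intro: inj_on_subset)
  moreover have "g \<in> ?V" using g U(2) U2(2) A(3) by blast
  ultimately show ?thesis using cV oV by (intro exI[of _ ?V]) auto
qed

end



lemma countable_compact_open: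
  assumes "second_countable Y"
  shows "countable {V. openin Y V \<and> compactin Y V}"
proof -
  obtain B where B: "countable B" "\<forall>V\<in>B. openin Y V"
      "\<forall>U x. openin Y U \<and> x \<in> U \<longrightarrow> (\<exists>V\<in>B. x \<in> V \<and> V \<subseteq> U)"
    using assms unfolding second_countable_def by blast
  have "{V. openin Y V \<and> compactin Y V} \<subseteq> Union ` {F. finite F \<and> F \<subseteq> B}"
  proof
    fix V assume "V \<in> {V. openin Y V \<and> compactin Y V}"
    then have V: "openin Y V" "compactin Y V" by auto
    let ?U = "{b \<in> B. b \<subseteq> V}"
    have "V \<subseteq> \<Union>?U" using B(3) V(1) by blast
    moreover have "\<forall>b\<in>?U. openin Y b" using B(2) by blast
    ultimately obtain F where F: "finite F" "F \<subseteq> ?U" "V \<subseteq> \<Union>F"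
      using V(2) unfolding compactin_def by (elim conjE allE[of _ ?U]) blast
    then have "V = \<Union>F" by blast
    then show "V \<in> Union ` {F. finite F \<and> F \<subseteq> B}" using F by blast
  qed
  moreover have "countable (Union ` {F. finite F \<and> F \<subseteq> B})"
    by (rule countable_image[OF countable_Collect_finite_subset[OF B(1)]])
  ultimately show ?thesis by (rule countable_subset)
qed

context EG2 begin

definition "Bis = {V. openin T V \<and> compactin T V \<and> Gset r s V}"
definition "Clo = {A. closedin X A \<and> openin X A}"

lemma countable_Bis: "countable Bis"
proof -
  have "Bis \<subseteq> {V. openin T V \<and> compactin T V}" by (auto simp: Bis_def)
  then show ?thesis by (rule countable_subset[OF _ countable_compact_open[OF sc]])
qed

lemma Clo_cpt: "A \<in> Clo \<Longrightarrow> compactin X A"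
  unfolding Clo_def using X_compact closedin_compact_space by blast

lemma countable_Clo: "countable Clo"
proof -
  have "Clo \<subseteq> {V. openin X V \<and> compactin X V}" using Clo_cpt by (auto simp: Clo_def)
  then show ?thesis by (rule countable_subset[OF _ countable_compact_open[OF second_countable_subtopology[OF sc]]])
qed

lemma empty_Bis: "{} \<in> Bis" unfolding Bis_def Gset_def by auto
lemma empty_Clo: "{} \<in> Clo" unfolding Clo_def by auto

lemma Bis_G: "V \<in> Bis \<Longrightarrow> V \<subseteq> G" unfolding Bis_def using openin_subset by blast

lemma inj_i_image:
  assumes VG: "V \<subseteq> G" and inj: "inj_on f V" and fi: "\<And>y. y \<in> G \<Longrightarrow> g (i y) = f y"
  shows "inj_on g (i ` V)"
proof (rule inj_onI)
  fix a b assume a: "a \<in> i ` V" and b: "b \<in> i ` V" and e: "g a = g b"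
  obtain a' where a': "a' \<in> V" "a = i a'" using a by blast
  obtain b' where b': "b' \<in> V" "b = i b'" using b by blast
  have "f a' = f b'" using e a' b' fi VG by (metis subsetD)
  then have "a' = b'" using inj a'(1) b'(1) by (simp add: inj_on_eq_iff)
  then show "a = b" using a' b' by simp
qed

lemma Bis_i: assumes V: "V \<in> Bis" shows "i ` V \<in> Bis"
proof -
  have VG: "V \<subseteq> G" using Bis_G V by blast
  have ij: "inj_on r V" "inj_on s V" using V unfolding Bis_def Gset_def by auto
  have "inj_on r (i ` V)" using inj_i_image[OF VG ij(2), of r] inv by blast
  moreover have "inj_on s (i ` V)" using inj_i_image[OF VG ij(1), of s] inv by blast
  moreover have "openin T (i ` V)" "compactin T (i ` V)" using V i_open i_compact unfolding Bis_def by auto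
  ultimately show ?thesis unfolding Bis_def Gset_def by simp
qed

lemma Bis_r_Clo: assumes "V \<in> Bis" shows "r ` V \<in> Clo"
proof -
  have "compactin X (r ` V)" using assms image_compactin r_cont unfolding Bis_def by blast
  then have "closedin X (r ` V)" using compactin_imp_closedin X_Haus by blast
  then show ?thesis using r_open assms unfolding Bis_def Clo_def by blast
qed

lemma Bis_s_Clo: "V \<in> Bis \<Longrightarrow> s ` V \<in> Clo"
proof -
  assume V: "V \<in> Bis"
  have "s ` V = r ` (i ` V)" using r_image_i[OF Bis_G[OF V]] by simp
  then show ?thesis using Bis_r_Clo[OF Bis_i[OF V]] by simp
qed

lemma Clo_open_union: assumes W: "openin X W" shows "W = \<Union>{A \<in> Clo. A \<subseteq> W}"
  using clopen_nbhd[OF W] unfolding Clo_def by blast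

lemma Bis_open_union: assumes W: "openin T W" shows "W = \<Union>{V \<in> Bis. V \<subseteq> W}"
  using bisection_basis[OF W] unfolding Bis_def by blast

end



context EG2 begin

lemma elem_sub: "elementary_subgroupoid T G0 r s m i K \<Longrightarrow> K \<subseteq> G"
  unfolding elementary_subgroupoid_def using compactin_subset_topspace by blast

lemma stage_ineq:
  fixes x
  assumes K: "elementary_subgroupoid T G0 r s m i K" and C: "compactin T C"
    and V: "V \<in> Bis" and VC: "V \<subseteq> C"
  defines "Kx \<equiv> {k \<in> K. s k = x}"
  defines "CKx \<equiv> {m c k | c k. c \<in> C \<and> k \<in> Kx \<and> s c = r k}"
  defines "F \<equiv> r ` Kx"
  shows "card (F \<inter> s ` V) \<le> card (F \<inter> r ` V) + card (CKx - Kx)"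
proof -
  have KG: "K \<subseteq> G" using elem_sub[OF K] .
  have VG: "V \<subseteq> G" using Bis_G[OF V] .
  have CG: "C \<subseteq> G" using C compactin_subset_topspace by blast
  have injr: "inj_on r V" using V unfolding Bis_def Gset_def by blast
  have Kcpt: "compactin T K" using K unfolding elementary_subgroupoid_def by blast
  have finKx: "finite Kx" unfolding Kx_def using finite_fiber_s[OF Kcpt] .
  have finF: "finite F" unfolding F_def using finKx by blast
  have "CKx \<subseteq> (\<lambda>(k, c). m c k) ` (Sigma Kx (\<lambda>k. {c \<in> C. s c = r k}))"
    unfolding CKx_def by (auto simp: image_iff)
  moreover have "finite (Sigma Kx (\<lambda>k. {c \<in> C. s c = r k}))"
    using finKx finite_fiber_s[OF C] by blast
  ultimately have finCKx: "finite CKx" using finite_subset by blast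
  define S where "S = F \<inter> s ` V"
  define vv where "vv y = (SOME v. v \<in> V \<and> s v = y)" for y
  define kk where "kk y = (SOME k. k \<in> Kx \<and> r k = y)" for y
  define psi where "psi y = m (vv y) (kk y)" for y
  have vv: "vv y \<in> V \<and> s (vv y) = y" if "y \<in> S" for y
  proof -
    have "\<exists>v. v \<in> V \<and> s v = y" using that unfolding S_def by blast
    then show ?thesis unfolding vv_def by (rule someI_ex)
  qed
  have kk: "kk y \<in> Kx \<and> r (kk y) = y" if "y \<in> S" for y
  proof -
    have "\<exists>k. k \<in> Kx \<and> r k = y" using that unfolding S_def F_def by blast
    then show ?thesis unfolding kk_def by (rule someI_ex)
  qed
  have psi: "psi y \<in> CKx \<and> r (psi y) = r (vv y)" if "y \<in> S" for y
  proof -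
    have a: "vv y \<in> C" "vv y \<in> G" "s (vv y) = y" using vv[OF that] VC VG by auto
    have b: "kk y \<in> Kx" "kk y \<in> G" "r (kk y) = y" using kk[OF that] KG unfolding Kx_def by auto
    have "s (vv y) = r (kk y)" using a b by simp
    then have "r (psi y) = r (vv y)" unfolding psi_def using mG a b by blast
    moreover have "psi y \<in> CKx" unfolding CKx_def psi_def using a b by (intro CollectI exI[of _ "vv y"] exI[of _ "kk y"]) simp
    ultimately show ?thesis by blast
  qed
  have inj: "inj_on (\<lambda>y. r (vv y)) S"
  proof (rule inj_onI)
    fix a b assume ab: "a \<in> S" "b \<in> S" "r (vv a) = r (vv b)"
    then have "vv a = vv b" using injr vv by (meson inj_onD)
    then show "a = b" using vv ab by metis
  qed
  have inj2: "inj_on psi S"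
  proof (rule inj_onI)
    fix a b assume ab: "a \<in> S" "b \<in> S" "psi a = psi b"
    then have "r (vv a) = r (vv b)" using psi by metis
    then show "a = b" using inj ab inj_onD by fast
  qed
  define S1 where "S1 = {y \<in> S. psi y \<in> Kx}"
  define S2 where "S2 = {y \<in> S. psi y \<notin> Kx}"
  have "card S1 \<le> card (F \<inter> r ` V)"
  proof (rule card_inj_on_le[where f = "\<lambda>y. r (vv y)"])
    show "inj_on (\<lambda>y. r (vv y)) S1" using inj unfolding S1_def by (rule inj_on_subset) auto
    show "(\<lambda>y. r (vv y)) ` S1 \<subseteq> F \<inter> r ` V"
    proof
      fix z assume "z \<in> (\<lambda>y. r (vv y)) ` S1"
      then obtain y where y: "y \<in> S" "psi y \<in> Kx" "z = r (vv y)" unfolding S1_def by blast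
      have "z = r (psi y)" using psi y by simp
      then have "z \<in> F" unfolding F_def using y by blast
      moreover have "z \<in> r ` V" using vv y by blast
      ultimately show "z \<in> F \<inter> r ` V" by blast
    qed
    show "finite (F \<inter> r ` V)" using finF by blast
  qed
  moreover have "card S2 \<le> card (CKx - Kx)"
  proof (rule card_inj_on_le[where f = psi])
    show "inj_on psi S2" using inj2 unfolding S2_def by (rule inj_on_subset) auto
    show "psi ` S2 \<subseteq> CKx - Kx" using psi unfolding S2_def by auto
    show "finite (CKx - Kx)" using finCKx by blast
  qed
  moreover have "card S \<le> card S1 + card S2"
  proof -
    have "S = S1 \<union> S2" unfolding S1_def S2_def by blast
    then show ?thesis using card_Un_le by metis
  qed
  ultimately show ?thesis unfolding S_def by linarith
qed

end



locale EG3 = EG2 +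
  assumes af: "almost_finite T G0 r s m i"
    and G0ne: "G0 \<noteq> {}"
begin

definition "Vs = from_nat_into Bis"
definition "Cn n = (\<Union>j\<le>n. Vs j \<union> i ` Vs j)"

lemma Vs_Bis: "Vs j \<in> Bis" unfolding Vs_def using from_nat_into empty_Bis by blast
lemma Vs_range: "V \<in> Bis \<Longrightarrow> \<exists>j. Vs j = V"
  unfolding Vs_def using from_nat_into_to_nat_on countable_Bis by metis

lemma Cn_cpt: "compactin T (Cn n)"
  unfolding Cn_def
proof (rule compactin_Union)
  show "finite ((\<lambda>j. Vs j \<union> i ` Vs j) ` {..n})" by simp
  show "\<And>S. S \<in> (\<lambda>j. Vs j \<union> i ` Vs j) ` {..n} \<Longrightarrow> compactin T S"
    using Vs_Bis Bis_i unfolding Bis_def by (auto intro!: compactin_Un)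
qed

definition "Kn n = (SOME K. elementary_subgroupoid T G0 r s m i K \<and>
           (\<forall>x\<in>G0.
              let Kx = {k \<in> K. s k = x};
                  CKx = {m c k | c k. c \<in> Cn n \<and> k \<in> Kx \<and> s c = r k}
              in real (card (CKx - Kx)) / real (card (r ` Kx)) < 1 / (real n + 1)))"

lemma Kn: "elementary_subgroupoid T G0 r s m i (Kn n) \<and>
           (\<forall>x\<in>G0.
              let Kx = {k \<in> Kn n. s k = x};
                  CKx = {m c k | c k. c \<in> Cn n \<and> k \<in> Kx \<and> s c = r k}
              in real (card (CKx - Kx)) / real (card (r ` Kx)) < 1 / (real n + 1))"
proof -
  have "(1::real) / (real n + 1) > 0" by simp
  then show ?thesis using af Cn_cpt unfolding almost_finite_def Kn_def
    by - (rule someI_ex, blast)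
qed

definition "x0 = (SOME x. x \<in> G0)"
lemma x0: "x0 \<in> G0" unfolding x0_def using G0ne by (simp add: some_in_eq)

definition "Fn n = r ` {k \<in> Kn n. s k = x0}"

lemma Fn_fin: "finite (Fn n)"
proof -
  have "compactin T (Kn n)" using Kn unfolding elementary_subgroupoid_def by blast
  then show ?thesis unfolding Fn_def using finite_fiber_s by blast
qed

lemma Fn_x0: "x0 \<in> Fn n"
proof -
  have "G0 \<subseteq> Kn n" using Kn unfolding elementary_subgroupoid_def by blast
  then have "x0 \<in> {k \<in> Kn n. s k = x0}" using x0 unit_s by auto
  then show ?thesis unfolding Fn_def using unit_r x0 by force
qed

lemma Fn_G0: "Fn n \<subseteq> G0"
  unfolding Fn_def using elem_sub[OF Kn[THEN conjunct1]] rG0 by blast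

lemma Fn_card: "card (Fn n) > 0" using Fn_fin Fn_x0 card_gt_0_iff by blast

definition "nu n A = real (card (A \<inter> Fn n)) / real (card (Fn n))"

lemma nu_nonneg: "nu n A \<ge> 0" unfolding nu_def by simp
lemma nu_le1: "nu n A \<le> 1"
  unfolding nu_def using Fn_card Fn_fin by (simp add: card_mono divide_le_eq_1)
lemma nu_G0: "nu n G0 = 1"
  unfolding nu_def using Fn_card Fn_G0 by (simp add: Int_absorb1)
lemma nu_empty: "nu n {} = 0" unfolding nu_def by simp
lemma nu_add: "A \<inter> B = {} \<Longrightarrow> nu n (A \<union> B) = nu n A + nu n B"
proof -
  assume d: "A \<inter> B = {}"
  have "(A \<union> B) \<inter> Fn n = (A \<inter> Fn n) \<union> (B \<inter> Fn n)" by blast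
  moreover have "card ((A \<inter> Fn n) \<union> (B \<inter> Fn n)) = card (A \<inter> Fn n) + card (B \<inter> Fn n)"
    using d Fn_fin by (intro card_Un_disjoint) auto
  ultimately show ?thesis unfolding nu_def by (simp add: add_divide_distrib)
qed

lemma nu_bound:
  assumes jn: "j \<le> n"
  shows "\<bar>nu n (r ` Vs j) - nu n (s ` Vs j)\<bar> < 1 / (real n + 1)"
proof -
  define Kx where "Kx = {k \<in> Kn n. s k = x0}"
  define CKx where "CKx = {m c k | c k. c \<in> Cn n \<and> k \<in> Kx \<and> s c = r k}"
  have Fn: "Fn n = r ` Kx" unfolding Fn_def Kx_def ..
  have K: "elementary_subgroupoid T G0 r s m i (Kn n)" using Kn by blast
  have rat: "real (card (CKx - Kx)) / real (card (Fn n)) < 1 / (real n + 1)"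
    using Kn x0 unfolding Fn Kx_def CKx_def Let_def by blast
  let ?V = "Vs j"
  have V: "?V \<in> Bis" by (rule Vs_Bis)
  have iV: "i ` ?V \<in> Bis" using Bis_i V by blast
  have VC: "?V \<subseteq> Cn n" "i ` ?V \<subseteq> Cn n" using jn unfolding Cn_def by auto
  have VG: "?V \<subseteq> G" using Bis_G V by blast
  have i1: "card (Fn n \<inter> s ` ?V) \<le> card (Fn n \<inter> r ` ?V) + card (CKx - Kx)"
    using stage_ineq[OF K Cn_cpt V VC(1), of x0] unfolding Fn Kx_def CKx_def by simp
  have i2: "card (Fn n \<inter> s ` (i ` ?V)) \<le> card (Fn n \<inter> r ` (i ` ?V)) + card (CKx - Kx)"
    using stage_ineq[OF K Cn_cpt iV VC(2), of x0] unfolding Fn Kx_def CKx_def by simp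
  have i2': "card (Fn n \<inter> r ` ?V) \<le> card (Fn n \<inter> s ` ?V) + card (CKx - Kx)"
    using i2 s_image_i[OF VG] r_image_i[OF VG] by simp
  have c: "real (card (Fn n)) > 0" using Fn_card by simp
  have "\<bar>real (card (r ` ?V \<inter> Fn n)) - real (card (s ` ?V \<inter> Fn n))\<bar> \<le> real (card (CKx - Kx))"
    using i1 i2' by (simp add: Int_commute abs_le_iff)
  then have "\<bar>nu n (r ` ?V) - nu n (s ` ?V)\<bar> \<le> real (card (CKx - Kx)) / real (card (Fn n))"
    unfolding nu_def using c by (simp add: diff_divide_distrib[symmetric] abs_divide divide_right_mono)
  then show ?thesis using rat by linarith
qed

end



lemma bounded_seq_subseq:
  fixes f :: "nat \<Rightarrow> nat \<Rightarrow> real"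
  assumes "\<And>n j. f n j \<in> {0..1}"
  shows "\<exists>\<sigma> l. strict_mono \<sigma> \<and> (\<forall>j. (\<lambda>n. f (\<sigma> n) j) \<longlonglongrightarrow> l j)"
proof -
  let ?S = "PiE (UNIV::nat set) (\<lambda>_. {0..1::real})"
  have "compactin (product_topology (\<lambda>_. euclidean) UNIV) ?S"
    by (simp add: compactin_PiE)
  then have "compact ?S" by (simp add: euclidean_product_topology)
  then have "seq_compact ?S" by (rule compact_imp_seq_compact)
  moreover have "\<forall>n. f n \<in> ?S" using assms by auto
  ultimately obtain l \<sigma> where l: "strict_mono \<sigma>" "(f \<circ> \<sigma>) \<longlonglongrightarrow> l"
    by (rule seq_compactE)
  have "(\<lambda>n. f (\<sigma> n) j) \<longlonglongrightarrow> l j" for j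
    using continuous_on_tendsto_compose[OF continuous_on_product_coordinates[of j] l(2)]
    by (simp add: o_def)
  then show ?thesis using l(1) by blast
qed

context EG3 begin

definition "As = from_nat_into Clo"

lemma As_Clo: "As j \<in> Clo" unfolding As_def using from_nat_into empty_Clo by blast

definition "sig = (SOME \<sigma>. \<exists>l. strict_mono \<sigma> \<and> (\<forall>j. (\<lambda>n. nu (\<sigma> n) (As j)) \<longlonglongrightarrow> l j))"
definition "lim_l = (SOME l. strict_mono sig \<and> (\<forall>j. (\<lambda>n. nu (sig n) (As j)) \<longlonglongrightarrow> l j))"

lemma sig: "strict_mono sig \<and> (\<forall>j. (\<lambda>n. nu (sig n) (As j)) \<longlonglongrightarrow> lim_l j)"
proof -
  have "\<exists>\<sigma> l. strict_mono \<sigma> \<and> (\<forall>j. (\<lambda>n. nu (\<sigma> n) (As j)) \<longlonglongrightarrow> l j)"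
    using bounded_seq_subseq[of "\<lambda>n j. nu n (As j)"] nu_nonneg nu_le1 by auto
  then have "\<exists>l. strict_mono sig \<and> (\<forall>j. (\<lambda>n. nu (sig n) (As j)) \<longlonglongrightarrow> l j)"
    unfolding sig_def by (rule someI_ex)
  then show ?thesis unfolding lim_l_def by (rule someI_ex)
qed

definition "L A = lim_l (to_nat_on Clo A)"

lemma L_lim: "A \<in> Clo \<Longrightarrow> (\<lambda>n. nu (sig n) A) \<longlonglongrightarrow> L A"
proof -
  assume A: "A \<in> Clo"
  have "As (to_nat_on Clo A) = A" unfolding As_def using A countable_Clo by simp
  moreover have "(\<lambda>n. nu (sig n) (As k)) \<longlonglongrightarrow> lim_l k" for k using sig by blast
  ultimately show ?thesis unfolding L_def by metis
qed

lemma L_nonneg: "A \<in> Clo \<Longrightarrow> L A \<ge> 0"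
  using LIMSEQ_le_const[OF L_lim, of A 0] nu_nonneg by blast

lemma G0_Clo: "G0 \<in> Clo"
proof -
  have "closedin X G0" "openin X G0" using closedin_topspace[of X] openin_topspace[of X] unfolding topX .
  then show ?thesis unfolding Clo_def by blast
qed

lemma L_G0: "L G0 = 1"
  using L_lim[OF G0_Clo] nu_G0 by (simp add: LIMSEQ_const_iff)

lemma L_empty: "L {} = 0"
  using L_lim[OF empty_Clo] nu_empty by (simp add: LIMSEQ_const_iff)

lemma Clo_Un: "A \<in> Clo \<Longrightarrow> B \<in> Clo \<Longrightarrow> A \<union> B \<in> Clo" unfolding Clo_def by auto
lemma Clo_Diff: "A \<in> Clo \<Longrightarrow> B \<in> Clo \<Longrightarrow> A - B \<in> Clo" unfolding Clo_def by auto
lemma Clo_G0: "A \<in> Clo \<Longrightarrow> A \<subseteq> G0" unfolding Clo_def using closedin_subset topX by blast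

lemma L_add: assumes "A \<in> Clo" "B \<in> Clo" "A \<inter> B = {}" shows "L (A \<union> B) = L A + L B"
proof -
  have "(\<lambda>n. nu (sig n) (A \<union> B)) \<longlonglongrightarrow> L A + L B"
    using tendsto_add[OF L_lim[OF assms(1)] L_lim[OF assms(2)]] nu_add[OF assms(3)] by simp
  then show ?thesis using L_lim[OF Clo_Un[OF assms(1,2)]] LIMSEQ_unique by blast
qed

lemma L_inv: assumes V: "V \<in> Bis" shows "L (r ` V) = L (s ` V)"
proof -
  obtain j where j: "Vs j = V" using Vs_range[OF V] by blast
  have lim: "(\<lambda>n. nu (sig n) (r ` V) - nu (sig n) (s ` V)) \<longlonglongrightarrow> L (r ` V) - L (s ` V)"
    using tendsto_diff[OF L_lim[OF Bis_r_Clo[OF V]] L_lim[OF Bis_s_Clo[OF V]]] .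
  have sm: "strict_mono sig" using sig by blast
  have ev: "eventually (\<lambda>n. norm (nu (sig n) (r ` V) - nu (sig n) (s ` V)) \<le> 1 / (real n + 1)) sequentially"
  proof (rule eventually_sequentiallyI[of j])
    fix n assume "j \<le> n"
    moreover have "n \<le> sig n" using sm by (rule seq_suble)
    ultimately have "j \<le> sig n" by linarith
    then have "\<bar>nu (sig n) (r ` V) - nu (sig n) (s ` V)\<bar> < 1 / (real (sig n) + 1)"
      using nu_bound j by blast
    moreover have "1 / (real (sig n) + 1) \<le> 1 / (real n + 1)"
      using \<open>n \<le> sig n\<close> by (simp add: frac_le)
    ultimately show "norm (nu (sig n) (r ` V) - nu (sig n) (s ` V)) \<le> 1 / (real n + 1)" by simp
  qed
  have "(\<lambda>n. inverse (real (Suc n))) \<longlonglongrightarrow> 0" by (rule LIMSEQ_inverse_real_of_nat)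
  then have "(\<lambda>n. 1 / (real n + 1)) \<longlonglongrightarrow> 0" by (simp add: inverse_eq_divide add.commute)
  then have "(\<lambda>n. nu (sig n) (r ` V) - nu (sig n) (s ` V)) \<longlonglongrightarrow> 0"
    using Lim_null_comparison[OF ev] by blast
  then have "L (r ` V) - L (s ` V) = 0" using lim LIMSEQ_unique by blast
  then show ?thesis by simp
qed

end



context EG3 begin

lemma Clo_ring: "ring_of_sets G0 Clo"
  by (rule ring_of_setsI) (auto simp: empty_Clo Clo_Un Clo_Diff dest: Clo_G0)

definition "fL A = ennreal (L A)"

lemma fL_pos: "positive Clo fL"
  unfolding positive_def fL_def by (simp add: L_empty)

lemma fL_add: "additive Clo fL"
  unfolding additive_def fL_def using L_add L_nonneg by (simp add: ennreal_plus)

lemma decseq_empty: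
  assumes A: "range A \<subseteq> Clo" and dec: "decseq A" and e: "(\<Inter>i. A i) = {}"
  shows "\<exists>N. A N = {}"
proof -
  have cov: "G0 \<subseteq> (\<Union>n. G0 - A n)" using e by blast
  have op: "\<forall>U\<in>range (\<lambda>n. G0 - A n). openin X U"
  proof
    fix U assume "U \<in> range (\<lambda>n. G0 - A n)"
    then obtain n where n: "U = G0 - A n" by blast
    have "closedin X (A n)" using A unfolding Clo_def by blast
    then show "openin X U" unfolding n using openin_diff[OF openin_topspace[of X]] topX by metis
  qed
  have "compactin X G0" using X_compact topX unfolding compact_space_def by simp
  then obtain F where F: "finite F" "F \<subseteq> range (\<lambda>n. G0 - A n)" "G0 \<subseteq> \<Union>F"
    using cov op unfolding compactin_def by (elim conjE allE[of _ "range (\<lambda>n. G0 - A n)"]) blast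
  obtain N0 where N0: "finite N0" "F = (\<lambda>n. G0 - A n) ` N0"
    using F(1,2) finite_subset_image by metis
  define N where "N = Max (insert 0 N0)"
  have "A N = {}"
  proof -
    have sub: "A N \<subseteq> A k" if "k \<in> N0" for k
      using dec that N0(1) unfolding N_def decseq_def by simp
    have "A N \<subseteq> G0" using A Clo_G0 by blast
    then show ?thesis using F(3) sub unfolding N0(2) by blast
  qed
  then show ?thesis by blast
qed

lemma fL_cont:
  assumes A: "range A \<subseteq> Clo" and dec: "decseq A" and e: "(\<Inter>i. A i) = {}"
  shows "(\<lambda>i. fL (A i)) \<longlonglongrightarrow> 0"
proof -
  obtain N where N: "A N = {}" using decseq_empty[OF assms] by blast
  have "eventually (\<lambda>i. fL (A i) = 0) sequentially"
  proof (rule eventually_sequentiallyI[of N])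
    fix i assume "N \<le> i"
    then have "A i \<subseteq> A N" using dec unfolding decseq_def by blast
    then show "fL (A i) = 0" using N by (simp add: fL_def L_empty)
  qed
  then show ?thesis by (rule tendsto_eventually)
qed

lemma mu0_ex: "\<exists>\<mu> :: 'a set \<Rightarrow> ennreal. (\<forall>A \<in> Clo. \<mu> A = fL A) \<and> measure_space G0 (sigma_sets G0 Clo) \<mu>"
proof (rule ring_of_sets.caratheodory_empty_continuous[OF Clo_ring fL_pos fL_add])
  show "\<And>A. A \<in> Clo \<Longrightarrow> fL A \<noteq> \<infinity>" by (simp add: fL_def)
  show "\<And>A. range A \<subseteq> Clo \<Longrightarrow> decseq A \<Longrightarrow> (\<Inter>i. A i) = {} \<Longrightarrow> (\<lambda>i. fL (A i)) \<longlonglongrightarrow> 0"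
    by (rule fL_cont)
qed

end



context EG3 begin

definition "mu0 = (SOME \<mu>. (\<forall>A \<in> Clo. \<mu> A = fL A) \<and> measure_space G0 (sigma_sets G0 Clo) \<mu>)"

lemma mu0: "(\<forall>A \<in> Clo. mu0 A = fL A) \<and> measure_space G0 (sigma_sets G0 Clo) mu0"
  unfolding mu0_def using mu0_ex by (rule someI_ex)

definition "MM = measure_of G0 (sigma_sets G0 Clo) mu0"

lemma Clo_Pow: "Clo \<subseteq> Pow G0" using Clo_G0 by blast

lemma sa: "sigma_algebra G0 (sigma_sets G0 Clo)" using sigma_algebra_sigma_sets[OF Clo_Pow] .

lemma MM_sets: "sets MM = sigma_sets G0 Clo"
  unfolding MM_def using sigma_algebra.sets_measure_of_eq[OF sa] .

lemma MM_space: "space MM = G0"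
  unfolding MM_def using sigma_algebra.space_measure_of_eq[OF sa] .

lemma MM_emeasure: "A \<in> sigma_sets G0 Clo \<Longrightarrow> emeasure MM A = mu0 A"
  unfolding MM_def
  using mu0 emeasure_measure_of_sigma[OF sa, of mu0 A] unfolding measure_space_def by blast

lemma MM_Clo: "A \<in> Clo \<Longrightarrow> emeasure MM A = ennreal (L A)"
  using MM_emeasure mu0 unfolding fL_def by (simp add: sigma_sets.Basic)

lemma MM_prob: "prob_space MM"
  by (rule prob_spaceI) (simp add: MM_space MM_Clo[OF G0_Clo] L_G0)

lemma sigma_eq: "sigma_sets G0 Clo = sigma_sets G0 {U. openin X U}"
proof (rule sigma_sets_eqI)
  fix a assume "a \<in> Clo"
  then show "a \<in> sigma_sets G0 {U. openin X U}" unfolding Clo_def by (simp add: sigma_sets.Basic)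
next
  fix b assume "b \<in> {U. openin X U}"
  then have b: "openin X b" by simp
  let ?Q = "insert {} {A \<in> Clo. A \<subseteq> b}"
  have cQ: "countable ?Q" using countable_Clo by (simp add: countable_subset[of _ Clo])
  have beq: "b = (\<Union>n. from_nat_into ?Q n)"
    using range_from_nat_into[of ?Q] cQ Clo_open_union[OF b] by auto
  have "from_nat_into ?Q n \<in> sigma_sets G0 Clo" for n
  proof -
    have "from_nat_into ?Q n \<in> ?Q" using from_nat_into[of ?Q n] by blast
    then show ?thesis by (auto intro: sigma_sets.Basic sigma_sets.Empty)
  qed
  then have "(\<Union>n. from_nat_into ?Q n) \<in> sigma_sets G0 Clo" by (rule sigma_sets.Union)
  then show "b \<in> sigma_sets G0 Clo" using beq by simp
qed

lemma Bis_disj: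
  assumes W: "\<And>n. Wn n \<in> Bis"
  shows "disjointed Wn n \<in> Bis"
proof -
  let ?Z = "\<Union>(Wn ` {..<n})"
  have Wc: "compactin T (Wn k)" and Wo: "openin T (Wn k)" and Wg: "Gset r s (Wn k)" for k
    using W[of k] unfolding Bis_def by auto
  have Zc: "compactin T ?Z" by (rule compactin_Union) (use Wc in auto)
  then have Zcl: "closedin T ?Z" using compactin_imp_closedin Haus by blast
  have Zo: "openin T ?Z" by (rule openin_Union) (use Wo in auto)
  have Wcl: "closedin T (Wn n)" using Wc compactin_imp_closedin Haus by blast
  have eq: "disjointed Wn n = Wn n - ?Z" unfolding disjointed_def by (simp add: atLeast0LessThan)
  have o: "openin T (Wn n - ?Z)" using Wo Zcl by (rule openin_diff)
  have "closedin T (Wn n - ?Z)" using Wcl Zo by (rule closedin_diff)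
  then have c: "compactin T (Wn n - ?Z)" using closed_compactin[OF Wc] by blast
  have g: "Gset r s (Wn n - ?Z)" using Wg[of n] unfolding Gset_def
    by (meson Diff_subset inj_on_subset)
  show ?thesis unfolding eq Bis_def using o c g by simp
qed

lemma MM_inv:
  assumes U: "openin T U" "Gset r s U"
  shows "emeasure MM (r ` U) = emeasure MM (s ` U)"
proof -
  let ?Q = "insert {} {V \<in> Bis. V \<subseteq> U}"
  have cQ: "countable ?Q" using countable_Bis by (simp add: countable_subset[of _ Bis])
  define Wn where "Wn = from_nat_into ?Q"
  have rW: "range Wn = ?Q" unfolding Wn_def by (rule range_from_nat_into[OF _ cQ]) simp
  have WQ: "Wn n \<in> ?Q" for n
  proof -
    have "Wn n \<in> range Wn" by (rule rangeI)
    then show ?thesis by (simp only: rW)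
  qed
  have WB: "Wn n \<in> Bis" for n using WQ[of n] empty_Bis by auto
  have WU: "Wn n \<subseteq> U" for n using WQ[of n] by auto
  define D where "D = disjointed Wn"
  have DB: "D n \<in> Bis" for n unfolding D_def by (rule Bis_disj[OF WB])
  have DU: "D n \<subseteq> U" for n unfolding D_def using WU[of n] disjointed_subset[of Wn n] by (rule order_trans[rotated])
  have Ueq: "U = (\<Union>n. D n)"
  proof -
    have "(\<Union>n. D n) = (\<Union>n. Wn n)" unfolding D_def by (rule UN_disjointed_eq)
    also have "\<dots> = \<Union>?Q" by (simp only: rW)
    also have "\<dots> = \<Union>{V \<in> Bis. V \<subseteq> U}" by auto
    also have "\<dots> = U" using Bis_open_union[OF U(1)] by (rule sym)
    finally show ?thesis by simp
  qed
  have dD: "disjoint_family D" unfolding D_def by (rule disjoint_family_disjointed)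
  have dimg: "disjoint_family (\<lambda>n. f ` D n)" if inj: "inj_on f U" for f
    unfolding disjoint_family_on_def
  proof (intro ballI impI)
    fix a b :: nat assume "a \<in> UNIV" "b \<in> UNIV" "a \<noteq> b"
    then have "D a \<inter> D b = {}" using dD unfolding disjoint_family_on_def by blast
    show "f ` D a \<inter> f ` D b = {}"
    proof (rule ccontr)
      assume "f ` D a \<inter> f ` D b \<noteq> {}"
      then obtain x y where xy: "x \<in> D a" "y \<in> D b" "f x = f y" by blast
      have "x \<in> U" "y \<in> U" using xy DU by auto
      then have "x = y" using inj_onD[OF inj xy(3)] by blast
      then show False using xy \<open>D a \<inter> D b = {}\<close> by blast
    qed
  qed
  have injr: "inj_on r U" and injs: "inj_on s U" using U(2) unfolding Gset_def by auto
  have rU: "r ` U = (\<Union>n. r ` D n)" "s ` U = (\<Union>n. s ` D n)" by (subst Ueq, rule image_UN)+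
  have mr: "range (\<lambda>n. r ` D n) \<subseteq> sets MM"
  proof
    fix z assume "z \<in> range (\<lambda>n. r ` D n)"
    then obtain n where "z = r ` D n" by blast
    then have "z \<in> Clo" using Bis_r_Clo[OF DB] by simp
    then have "z \<in> sigma_sets G0 Clo" by (rule sigma_sets.Basic)
    then show "z \<in> sets MM" by (simp only: MM_sets)
  qed
  have ms: "range (\<lambda>n. s ` D n) \<subseteq> sets MM"
  proof
    fix z assume "z \<in> range (\<lambda>n. s ` D n)"
    then obtain n where "z = s ` D n" by blast
    then have "z \<in> Clo" using Bis_s_Clo[OF DB] by simp
    then have "z \<in> sigma_sets G0 Clo" by (rule sigma_sets.Basic)
    then show "z \<in> sets MM" by (simp only: MM_sets)
  qed
  have eqn: "emeasure MM (r ` D n) = emeasure MM (s ` D n)" for n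
  proof -
    have "emeasure MM (r ` D n) = ennreal (L (r ` D n))" by (rule MM_Clo[OF Bis_r_Clo[OF DB]])
    also have "\<dots> = ennreal (L (s ` D n))" using L_inv[OF DB] by simp
    also have "\<dots> = emeasure MM (s ` D n)" by (rule MM_Clo[OF Bis_s_Clo[OF DB], symmetric])
    finally show ?thesis .
  qed
  have "emeasure MM (r ` U) = emeasure MM (\<Union>n. r ` D n)" using rU by simp
  also have "\<dots> = (\<Sum>n. emeasure MM (r ` D n))"
    by (rule suminf_emeasure[OF mr dimg[OF injr], symmetric])
  also have "\<dots> = (\<Sum>n. emeasure MM (s ` D n))" using eqn by simp
  also have "\<dots> = emeasure MM (\<Union>n. s ` D n)"
    by (rule suminf_emeasure[OF ms dimg[OF injs]])
  also have "\<dots> = emeasure MM (s ` U)" using rU by simp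
  finally show ?thesis .
qed

lemma MM_inv_meas: "MM \<in> invariant_measures T G0 r s"
  unfolding invariant_measures_def mem_Collect_eq
proof (intro conjI allI impI)
  show "space MM = G0" by (rule MM_space)
  show "sets MM = sigma_sets G0 {U. openin X U}" using MM_sets sigma_eq by simp
  show "prob_space MM" by (rule MM_prob)
  fix U assume "openin T U \<and> Gset r s U"
  then show "emeasure MM (r ` U) = emeasure MM (s ` U)" using MM_inv by blast
qed

end

theorem lemma6p5:
  fixes T :: "'g topology" and G0 :: "'g set"
    and r s :: "'g \<Rightarrow> 'g" and m :: "'g \<Rightarrow> 'g \<Rightarrow> 'g" and i :: "'g \<Rightarrow> 'g"
  assumes "etale_groupoid T G0 r s m i"
    and "second_countable T"
    and "G0 \<noteq> {}"
    and "compactin T G0"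
    and "totally_disconnected_space (subtopology T G0)"
    and "almost_finite T G0 r s m i"
  shows "invariant_measures T G0 r s \<noteq> {}"
proof -
  interpret EG3 T G0 r s m i
    by unfold_locales (use assms in auto)
  show ?thesis using MM_inv_meas by blast
qed


end
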